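(* Let $G=(V,E)$ be a finite connected simple graph with vertex-weight $m_0\colon V\to\mathbb{R}_{>0}$ and distance parameter $d\colon E\to\mathbb{R}_{>0}$; set $M=\sum_{u\in V}m_0(u)$, $D^2=\sum_{uv\in E}d(uv)^2$. Then $$\delta(G,m_0,d)\ \ge\ 1-\frac{D^2/M}{\sigma(G,m_0,d)}.$$ Equality holds if and only if there exist an edge-weight $m_1\colon E\to\mathbb{R}_{\ge0}$ (with $(V,\{uv: m_1(uv)>0\})$ connected and $\sum_{uv\in E}m_1(uv)d(uv)^2=D^2$) and a map $\varphi\colon V\to\mathbb{R}^{|V|}$ satisfying $\sum_{u\in V}m_0(u)\|\varphi(u)\|^2=M$ and $\|\varphi(u)-\varphi(v)\|\le d(uv)$ for all $uv\in E$, such that (i) $m_1(uv)\big(d(uv)^2-\|\varphi(u)-\varphi(v)\|^2\big)=0$ for all $uv\in E$, and (ii) $\Delta_{(m_0,m_1)}\varphi=\lambda_1(G,(m_0,m_1))(\varphi-\mathrm{bar}(\varphi))$ (componentwise).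
   Context: Edges are unordered pairs; $v\sim u$ means $uv\in E$; $\|\cdot\|$ is the Euclidean norm. $\mathrm{bar}(\varphi)=\frac1M\sum_u m_0(u)\varphi(u)$. $\delta(G,m_0,d)=\inf\|\mathrm{bar}(\varphi)\|^2$ over all $\varphi\colon V\to\mathbb{R}^{|V|}$ with $\sum_u m_0(u)\|\varphi(u)\|^2=M$ and $\|\varphi(u)-\varphi(v)\|\le d(uv)$ for all $uv\in E$. For an edge-weight $m_1\colon E\to\mathbb{R}_{\ge0}$, $(\Delta_{(m_0,m_1)}f)(u)=\frac{1}{m_0(u)}\big[(\sum_{v\sim u}m_1(uv))f(u)-\sum_{v\sim u}m_1(uv)f(v)\big]$ for $f\colon V\to\mathbb{R}$, and (when $(V,\{uv:m_1(uv)>0\})$ is connected) $\lambda_1(G,(m_0,m_1))$ is its smallest positive eigenvalue, equivalently $\inf_f\frac{\sum_{uv}m_1(uv)(f(u)-f(v))^2}{\sum_u m_0(u)(f(u)-\bar f)^2}$ over nonconstant $f$, $\bar f=\frac1M\sum_u m_0(u)f(u)$. $\sigma(G,m_0,d)=\sup_{m_1}\lambda_1(G,(m_0,m_1))$ over all edge-weights $m_1$ with $(V,\{uv:m_1(uv)>0\})$ connected and $\sum_{uv\in E}m_1(uv)d(uv)^2=D^2$. *)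

theory Defs
  imports "HOL-Analysis.Analysis"
begin

text \<open>Vertices are the elements of a finite type 'v (so V = UNIV and
  R^{|V|} is rendered as real^'v).  Edges are unordered pairs, i.e. two-element
  sets of vertices; edge functions (d, m1) have type 'v set => real.\<close>

definition simple_graph :: "'v set set \<Rightarrow> bool" where
  "simple_graph E \<longleftrightarrow> (\<forall>e\<in>E. card e = 2)"

definition edge_rel :: "'v set set \<Rightarrow> ('v \<times> 'v) set" where
  "edge_rel E = {(x, y). {x, y} \<in> E}"

definition graph_connected :: "'v set set \<Rightarrow> bool" where
  "graph_connected E \<longleftrightarrow> (\<forall>u v. (u, v) \<in> (edge_rel E)\<^sup>*)"

definition support_edges :: "'v set set \<Rightarrow> ('v set \<Rightarrow> real) \<Rightarrow> 'v set set" where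
  "support_edges E m1 = {e \<in> E. m1 e > 0}"

definition total_mass :: "('v::finite \<Rightarrow> real) \<Rightarrow> real" where
  "total_mass m0 = (\<Sum>u\<in>UNIV. m0 u)"

definition Dsq :: "'v set set \<Rightarrow> ('v set \<Rightarrow> real) \<Rightarrow> real" where
  "Dsq E d = (\<Sum>e\<in>E. (d e)\<^sup>2)"

definition bar :: "('v::finite \<Rightarrow> real) \<Rightarrow> ('v \<Rightarrow> 'w::real_vector) \<Rightarrow> 'w" where
  "bar m0 \<phi> = (1 / total_mass m0) *\<^sub>R (\<Sum>u\<in>UNIV. m0 u *\<^sub>R \<phi> u)"

definition laplacian ::
  "'v set set \<Rightarrow> ('v \<Rightarrow> real) \<Rightarrow> ('v set \<Rightarrow> real) \<Rightarrow> ('v \<Rightarrow> 'w::real_vector) \<Rightarrow> 'v \<Rightarrow> 'w" where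
  "laplacian E m0 m1 f u =
     (1 / m0 u) *\<^sub>R ((\<Sum>v\<in>{v. {u, v} \<in> E}. m1 {u, v}) *\<^sub>R f u
                       - (\<Sum>v\<in>{v. {u, v} \<in> E}. m1 {u, v} *\<^sub>R f v))"

definition lambda1 :: "'v set set \<Rightarrow> ('v \<Rightarrow> real) \<Rightarrow> ('v set \<Rightarrow> real) \<Rightarrow> real" where
  "lambda1 E m0 m1 = Inf {ev. ev > 0 \<and>
      (\<exists>f::'v \<Rightarrow> real. f \<noteq> (\<lambda>_. 0) \<and> laplacian E m0 m1 f = (\<lambda>u. ev * f u))}"

definition admissible_map ::
  "'v set set \<Rightarrow> ('v::finite \<Rightarrow> real) \<Rightarrow> ('v set \<Rightarrow> real) \<Rightarrow> ('v \<Rightarrow> real^'v) \<Rightarrow> bool" where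
  "admissible_map E m0 d \<phi> \<longleftrightarrow>
     (\<Sum>u\<in>UNIV. m0 u * (norm (\<phi> u))\<^sup>2) = total_mass m0 \<and>
     (\<forall>u v. {u, v} \<in> E \<longrightarrow> norm (\<phi> u - \<phi> v) \<le> d {u, v})"

definition delta :: "'v set set \<Rightarrow> ('v::finite \<Rightarrow> real) \<Rightarrow> ('v set \<Rightarrow> real) \<Rightarrow> real" where
  "delta E m0 d = Inf {(norm (bar m0 \<phi>))\<^sup>2 | \<phi>. admissible_map E m0 d \<phi>}"

definition admissible_weight ::
  "'v set set \<Rightarrow> ('v set \<Rightarrow> real) \<Rightarrow> ('v set \<Rightarrow> real) \<Rightarrow> bool" where
  "admissible_weight E d m1 \<longleftrightarrow>
     (\<forall>e\<in>E. m1 e \<ge> 0) \<and> graph_connected (support_edges E m1) \<and>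
     (\<Sum>e\<in>E. m1 e * (d e)\<^sup>2) = Dsq E d"

definition sigma :: "'v set set \<Rightarrow> ('v::finite \<Rightarrow> real) \<Rightarrow> ('v set \<Rightarrow> real) \<Rightarrow> real" where
  "sigma E m0 d = Sup {lambda1 E m0 m1 | m1. admissible_weight E d m1}"

end

theory Submission
  imports Defs
begin

locale gs =
  fixes E :: "'v::finite set set" and m0 :: "'v \<Rightarrow> real"
  assumes sg: "simple_graph E" and m0pos: "\<And>u. m0 u > 0"
begin

definition A :: "('v set \<Rightarrow> real) \<Rightarrow> 'v \<Rightarrow> 'v \<Rightarrow> real" where
  "A m1 u v = (if {u,v} \<in> E then m1 {u,v} else 0)"

lemma A_sym: "A m1 u v = A m1 v u" by (simp add: A_def insert_commute)

lemma lap_eq: "laplacian E m0 m1 f u = (1 / m0 u) *\<^sub>R (\<Sum>v\<in>UNIV. A m1 u v *\<^sub>R (f u - f v))"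
proof -
  have "(\<Sum>v\<in>UNIV. A m1 u v *\<^sub>R (f u - f v)) = (\<Sum>v\<in>{v. {u,v}\<in>E}. m1 {u,v} *\<^sub>R (f u - f v))"
  proof -
    have "\<And>v. A m1 u v *\<^sub>R (f u - f v) = (if {u,v}\<in>E then m1 {u,v} *\<^sub>R (f u - f v) else 0)"
      by (simp add: A_def)
    then show ?thesis
      using sum.inter_filter[of UNIV "\<lambda>v. m1 {u,v} *\<^sub>R (f u - f v)" "\<lambda>v. {u,v}\<in>E"] by simp
  qed
  also have "\<dots> = (\<Sum>v\<in>{v. {u,v}\<in>E}. m1 {u,v}) *\<^sub>R f u - (\<Sum>v\<in>{v. {u,v}\<in>E}. m1 {u,v} *\<^sub>R f v)"
    by (simp add: scaleR_diff_right sum_subtractf scaleR_sum_left)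
  finally show ?thesis unfolding laplacian_def by simp
qed

lemma lap_real: "laplacian E m0 m1 (f::'v\<Rightarrow>real) u = (\<Sum>v\<in>UNIV. A m1 u v * (f u - f v)) / m0 u"
  by (simp add: lap_eq)

lemma by_parts:
  fixes f g :: "'v \<Rightarrow> real"
  shows "(\<Sum>u\<in>UNIV. m0 u * laplacian E m0 m1 f u * g u)
     = (\<Sum>u\<in>UNIV. \<Sum>v\<in>UNIV. A m1 u v * (f u - f v) * (g u - g v)) / 2"
proof -
  define X where "X = (\<Sum>u\<in>UNIV. \<Sum>v\<in>UNIV. A m1 u v * (f u - f v) * g u)"
  have 1: "(\<Sum>u\<in>UNIV. m0 u * laplacian E m0 m1 f u * g u) = X"
  proof -
    have "m0 u \<noteq> 0" for u using m0pos[of u] by linarith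
    then show ?thesis unfolding X_def lap_real by (simp add: sum_distrib_right)
  qed
  have "X = (\<Sum>v\<in>UNIV. \<Sum>u\<in>UNIV. A m1 u v * (f u - f v) * g u)"
    unfolding X_def by (rule sum.swap)
  also have "\<dots> = (\<Sum>u\<in>UNIV. \<Sum>v\<in>UNIV. A m1 u v * (f v - f u) * g v)"
    by (simp add: A_sym)
  finally have 2: "X = - (\<Sum>u\<in>UNIV. \<Sum>v\<in>UNIV. A m1 u v * (f u - f v) * g v)"
    by (simp add: sum_negf[symmetric] algebra_simps)
  have "(\<Sum>u\<in>UNIV. \<Sum>v\<in>UNIV. A m1 u v * (f u - f v) * (g u - g v)) = X - (\<Sum>u\<in>UNIV. \<Sum>v\<in>UNIV. A m1 u v * (f u - f v) * g v)"
    unfolding X_def sum_subtractf[symmetric] by (intro sum.cong refl) (simp add: algebra_simps)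
  then show ?thesis using 1 2 by simp
qed


definition M where "M = total_mass m0"
definition Q :: "('v set \<Rightarrow> real) \<Rightarrow> ('v \<Rightarrow> real) \<Rightarrow> real" where
  "Q m1 f = (\<Sum>u\<in>UNIV. \<Sum>v\<in>UNIV. A m1 u v * (f u - f v)^2) / 2"
definition B :: "('v set \<Rightarrow> real) \<Rightarrow> ('v \<Rightarrow> real) \<Rightarrow> ('v \<Rightarrow> real) \<Rightarrow> real" where
  "B m1 f g = (\<Sum>u\<in>UNIV. \<Sum>v\<in>UNIV. A m1 u v * (f u - f v) * (g u - g v)) / 2"
definition N :: "('v \<Rightarrow> real) \<Rightarrow> real" where
  "N f = (\<Sum>u\<in>UNIV. m0 u * (f u)^2)"
definition IP :: "('v \<Rightarrow> real) \<Rightarrow> ('v \<Rightarrow> real) \<Rightarrow> real" where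
  "IP f g = (\<Sum>u\<in>UNIV. m0 u * f u * g u)"
definition mz :: "('v \<Rightarrow> real) \<Rightarrow> bool" where
  "mz f \<longleftrightarrow> (\<Sum>u\<in>UNIV. m0 u * f u) = 0"

lemma m0nz: "m0 u \<noteq> 0" using m0pos[of u] by linarith

lemma M_pos: "M > 0"
  unfolding M_def total_mass_def using m0pos
  by (simp add: sum_pos)

lemma bar_real: "bar m0 (f::'v\<Rightarrow>real) = (\<Sum>u\<in>UNIV. m0 u * f u) / M"
  by (simp add: bar_def M_def)

lemma B_parts: "IP (laplacian E m0 m1 f) g = B m1 f g"
  unfolding IP_def B_def using by_parts[of m1 f g] by (simp add: mult.assoc mult.left_commute)

lemma Q_B: "Q m1 f = B m1 f f"
  unfolding Q_def B_def by (simp add: power2_eq_square mult.assoc)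

lemma sum_lap: "(\<Sum>u\<in>UNIV. m0 u * laplacian E m0 m1 f u) = 0"
  using B_parts[of m1 f "\<lambda>_. 1"] by (simp add: IP_def B_def)

lemma lap_shift: "laplacian E m0 m1 (\<lambda>u. f u - c) = laplacian E m0 m1 (f::'v\<Rightarrow>real)"
  by (rule ext) (simp add: lap_real)

lemma Q_shift: "Q m1 (\<lambda>u. f u - c) = Q m1 f"
  by (simp add: Q_def)

lemma B_shift: "B m1 f (\<lambda>u. g u - c) = B m1 f g"
  by (simp add: B_def)

lemma mz_centered: "mz (\<lambda>u. f u - bar m0 f)"
proof -
  have "(\<Sum>u\<in>UNIV. m0 u * (f u - bar m0 f)) = (\<Sum>u\<in>UNIV. m0 u * f u) - M * bar m0 f"
    by (simp add: right_diff_distrib sum_subtractf sum_distrib_right[symmetric] M_def total_mass_def)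
  also have "\<dots> = 0" using M_pos by (simp add: bar_real)
  finally show ?thesis by (simp add: mz_def)
qed

lemma var_eq: "N (\<lambda>u. f u - bar m0 f) = N f - M * (bar m0 f)^2"
proof -
  define c where "c = bar m0 f"
  have s: "(\<Sum>u\<in>UNIV. m0 u * f u) = M * c" using M_pos by (simp add: bar_real c_def)
  have "N (\<lambda>u. f u - c) = (\<Sum>u\<in>UNIV. m0 u * (f u)^2 - 2 * c * (m0 u * f u) + c^2 * m0 u)"
    unfolding N_def by (intro sum.cong refl) (simp add: power2_eq_square algebra_simps)
  also have "\<dots> = N f - 2 * c * (\<Sum>u\<in>UNIV. m0 u * f u) + c^2 * M"
    by (simp add: N_def sum.distrib sum_subtractf sum_distrib_left M_def total_mass_def)
  also have "\<dots> = N f - M * c^2" using s by (simp add: power2_eq_square algebra_simps)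
  finally show ?thesis by (simp add: c_def)
qed

lemma N_nonneg: "N f \<ge> 0"
  unfolding N_def using m0pos by (intro sum_nonneg) (simp add: less_imp_le)

lemma N_zero: "N f = 0 \<Longrightarrow> f u = 0"
proof -
  assume "N f = 0"
  then have "\<forall>u\<in>UNIV. m0 u * (f u)^2 = 0"
    unfolding N_def using m0pos by (subst sum_nonneg_eq_0_iff[symmetric]) (auto simp: less_imp_le)
  then show "f u = 0" using m0nz by auto
qed

lemma A_nonneg: "\<forall>e\<in>E. m1 e \<ge> 0 \<Longrightarrow> A m1 u v \<ge> 0"
  by (simp add: A_def)

lemma Q_nonneg: "\<forall>e\<in>E. m1 e \<ge> 0 \<Longrightarrow> Q m1 f \<ge> 0"
  unfolding Q_def by (intro divide_nonneg_pos sum_nonneg mult_nonneg_nonneg A_nonneg) auto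

lemma Q_zero_const:
  assumes nn: "\<forall>e\<in>E. m1 e \<ge> 0" and con: "graph_connected (support_edges E m1)"
    and q: "Q m1 f = 0"
  shows "f u = f v"
proof -
  have "(\<Sum>u\<in>UNIV. \<Sum>v\<in>UNIV. A m1 u v * (f u - f v)^2) = 0" using q by (simp add: Q_def)
  then have z: "\<forall>u\<in>UNIV. (\<Sum>v\<in>UNIV. A m1 u v * (f u - f v)^2) = 0"
    by (subst sum_nonneg_eq_0_iff[symmetric]) (auto intro!: sum_nonneg mult_nonneg_nonneg A_nonneg nn)
  have zz: "A m1 x y * (f x - f y)^2 = 0" for x y
  proof -
    have "(\<Sum>v\<in>UNIV. A m1 x v * (f x - f v)^2) = 0" using z by simp
    then have "\<forall>v\<in>UNIV. A m1 x v * (f x - f v)^2 = 0"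
      by (subst (asm) sum_nonneg_eq_0_iff) (auto intro!: mult_nonneg_nonneg A_nonneg nn)
    then show ?thesis by simp
  qed
  have edge: "(x, y) \<in> edge_rel (support_edges E m1) \<Longrightarrow> f x = f y" for x y
  proof -
    assume "(x, y) \<in> edge_rel (support_edges E m1)"
    then have "{x,y}\<in>E" "m1 {x,y} > 0" by (auto simp: edge_rel_def support_edges_def)
    then have "A m1 x y \<noteq> 0" by (simp add: A_def)
    then show ?thesis using zz[of x y] by simp
  qed
  have "(u, v) \<in> (edge_rel (support_edges E m1))\<^sup>*" using con by (simp add: graph_connected_def)
  then show ?thesis
  proof (induction rule: rtrancl_induct)
    case base then show ?case by simp
  next
    case (step y z) then show ?case using edge by simp
  qed
qed

lemma Q_expand: "Q m1 (\<lambda>u. f u + t * g u) = Q m1 f + 2 * t * B m1 f g + t^2 * Q m1 g"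
proof -
  have "(\<Sum>u\<in>UNIV. \<Sum>v\<in>UNIV. A m1 u v * ((f u + t * g u) - (f v + t * g v))^2)
      = (\<Sum>u\<in>UNIV. \<Sum>v\<in>UNIV. A m1 u v * (f u - f v)^2 + 2 * t * (A m1 u v * (f u - f v) * (g u - g v)) + t^2 * (A m1 u v * (g u - g v)^2))"
    by (intro sum.cong refl) (simp add: power2_eq_square algebra_simps)
  also have "\<dots> = (\<Sum>u\<in>UNIV. \<Sum>v\<in>UNIV. A m1 u v * (f u - f v)^2) + 2 * t * (\<Sum>u\<in>UNIV. \<Sum>v\<in>UNIV. A m1 u v * (f u - f v) * (g u - g v)) + t^2 * (\<Sum>u\<in>UNIV. \<Sum>v\<in>UNIV. A m1 u v * (g u - g v)^2)"
    by (simp add: sum.distrib sum_distrib_left)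
  finally show ?thesis unfolding Q_def B_def by (simp add: algebra_simps add_divide_distrib)
qed

lemma N_expand: "N (\<lambda>u. f u + t * g u) = N f + 2 * t * IP f g + t^2 * N g"
proof -
  have "N (\<lambda>u. f u + t * g u) = (\<Sum>u\<in>UNIV. m0 u * (f u)^2 + 2 * t * (m0 u * f u * g u) + t^2 * (m0 u * (g u)^2))"
    unfolding N_def by (intro sum.cong refl) (simp add: power2_eq_square algebra_simps)
  also have "\<dots> = N f + 2 * t * IP f g + t^2 * N g"
    by (simp add: sum.distrib sum_distrib_left N_def IP_def)
  finally show ?thesis .
qed

lemma quad_zero:
  fixes b c :: real
  assumes "\<forall>t. 0 \<le> 2 * t * b + t^2 * c" and "b \<ge> 0"
  shows "b = 0"
proof (rule ccontr)
  assume "b \<noteq> 0"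
  then have bp: "b > 0" using assms(2) by simp
  define t where "t = - b / (\<bar>c\<bar> + 1)"
  have tn: "t < 0" using bp by (simp add: t_def divide_neg_pos)
  have "- (t * c) \<le> \<bar>t\<bar> * \<bar>c\<bar>" by (metis abs_ge_minus_self abs_mult)
  also have "\<bar>t\<bar> * \<bar>c\<bar> = b * (\<bar>c\<bar> / (\<bar>c\<bar> + 1))" using bp by (simp add: t_def abs_divide abs_minus_cancel)
  also have "\<dots> < b"
  proof -
    have f1: "\<bar>c\<bar> / (\<bar>c\<bar> + 1) < 1" by (auto simp: divide_less_eq)
    show ?thesis using mult_strict_left_mono[OF f1 bp] by simp
  qed
  finally have "2 * b + t * c > 0" using bp by linarith
  then have "t * (2 * b + t * c) < 0" using tn by (simp add: mult_neg_pos)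
  moreover have "0 \<le> 2 * t * b + t^2 * c" using assms(1) by blast
  ultimately show False by (simp add: power2_eq_square algebra_simps)
qed

lemma variational:
  assumes P: "\<forall>g. mz g \<longrightarrow> \<mu> * N g \<le> Q m1 g" and h: "mz h" and eq: "Q m1 h = \<mu> * N h"
  shows "laplacian E m0 m1 h u = \<mu> * h u"
proof -
  define r where "r = (\<lambda>u. laplacian E m0 m1 h u - \<mu> * h u)"
  have mzr: "mz r" using h sum_lap[of m1 h]
    by (simp add: mz_def r_def right_diff_distrib sum_subtractf algebra_simps sum_distrib_left[symmetric])
  have "B m1 h r - \<mu> * IP h r = IP r r"
    unfolding B_parts[symmetric] IP_def sum_distrib_left sum_subtractf[symmetric]
    by (intro sum.cong refl) (simp add: r_def algebra_simps)
  also have "IP r r = N r" by (simp add: IP_def N_def power2_eq_square mult.assoc)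
  finally have BI: "B m1 h r - \<mu> * IP h r = N r" .
  have "0 \<le> 2 * t * N r + t^2 * (Q m1 r - \<mu> * N r)" for t
  proof -
    have "mz (\<lambda>u. h u + t * r u)" using h mzr
      by (simp add: mz_def distrib_left sum.distrib algebra_simps sum_distrib_left[symmetric])
    then have ineq: "\<mu> * N (\<lambda>u. h u + t * r u) \<le> Q m1 (\<lambda>u. h u + t * r u)" using P by blast
    have BI': "B m1 h r = N r + \<mu> * IP h r" using BI by simp
    have "2 * t * N r + t^2 * (Q m1 r - \<mu> * N r) = Q m1 (\<lambda>u. h u + t * r u) - \<mu> * N (\<lambda>u. h u + t * r u)"
      unfolding Q_expand N_expand BI' eq by (simp add: algebra_simps)
    then show ?thesis using ineq by linarith
  qed
  then have "N r = 0" using quad_zero N_nonneg by blast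
  then show ?thesis using N_zero[of r u] by (simp add: r_def)
qed

lemma Q_scale: "Q m1 (\<lambda>u. c * f u) = c^2 * Q m1 f"
proof -
  have "Q m1 (\<lambda>u. c * f u) = (\<Sum>u\<in>UNIV. \<Sum>v\<in>UNIV. c^2 * (A m1 u v * (f u - f v)^2)) / 2"
    unfolding Q_def by (intro arg_cong[where f="\<lambda>x. x/2"] sum.cong refl) (simp add: power2_eq_square algebra_simps)
  then show ?thesis by (simp add: Q_def sum_distrib_left[symmetric])
qed

lemma N_scale: "N (\<lambda>u. c * f u) = c^2 * N f"
  unfolding N_def by (simp add: sum_distrib_left power_mult_distrib algebra_simps)

lemma mz_scale: "mz f \<Longrightarrow> mz (\<lambda>u. c * f u)"
  unfolding mz_def by (simp add: sum_distrib_left[symmetric] algebra_simps)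

lemma vec_fun: "(($) (vec_lambda g)) = g"
  by (rule ext) simp

lemma two_vertices_nonconst:
  assumes "a \<noteq> (b::'v)"
  shows "\<exists>f. mz f \<and> N f = 1"
proof -
  define f0 where "f0 = (\<lambda>u. (if u = a then 1 else 0) - bar m0 (\<lambda>u. if u = a then 1 else (0::real)))"
  have mz0: "mz f0" unfolding f0_def by (rule mz_centered)
  have "f0 a - f0 b = 1" using assms by (simp add: f0_def)
  then have "N f0 \<noteq> 0" using N_zero[of f0] by force
  then have Np: "N f0 > 0" using N_nonneg[of f0] by linarith
  define g where "g = (\<lambda>u. (1 / sqrt (N f0)) * f0 u)"
  have "mz g" unfolding g_def by (rule mz_scale[OF mz0])
  moreover have "N g = 1" unfolding g_def N_scale using Np by (simp add: power_divide)
  ultimately show ?thesis by blast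
qed

lemma lambda1_char:
  assumes nn: "\<forall>e\<in>E. m1 e \<ge> 0" and con: "graph_connected (support_edges E m1)" and ab: "a \<noteq> (b::'v)"
  shows "lambda1 E m0 m1 > 0 \<and> (\<forall>g. mz g \<longrightarrow> lambda1 E m0 m1 * N g \<le> Q m1 g)
     \<and> (\<exists>h. mz h \<and> N h = 1 \<and> Q m1 h = lambda1 E m0 m1)"
proof -
  define S where "S = {x::real^'v. mz (($) x) \<and> N (($) x) = 1}"
  have cont_mzsum: "continuous_on UNIV (\<lambda>x::real^'v. \<Sum>u\<in>UNIV. m0 u * x$u)" by (intro continuous_intros)
  have cont_N: "continuous_on UNIV (\<lambda>x::real^'v. N (($) x))" unfolding N_def by (intro continuous_intros)
  have cont_Q: "continuous_on UNIV (\<lambda>x::real^'v. Q m1 (($) x))" unfolding Q_def by (intro continuous_intros) auto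
  have clo: "closed S" unfolding S_def mz_def
    by (intro closed_Collect_conj closed_Collect_eq cont_mzsum cont_N continuous_intros)
  have bnd: "bounded S"
  proof -
    have "norm x \<le> (\<Sum>u\<in>UNIV. 1 + 1 / m0 u)" if "x \<in> S" for x
    proof -
      have "\<bar>x$u\<bar> \<le> 1 + 1/m0 u" for u
      proof -
        have "m0 u * (x$u)^2 \<le> N (($) x)" unfolding N_def
          by (rule member_le_sum) (simp_all add: m0pos less_imp_le)
        then have "m0 u * (x$u)^2 \<le> 1" using that by (simp add: S_def)
        then have y: "(x$u)^2 \<le> 1/m0 u" using m0pos[of u] by (simp add: field_simps)
        have "1/m0 u > 0" using m0pos[of u] by simp
        show ?thesis
        proof (cases "\<bar>x$u\<bar> \<le> 1")
          case True then show ?thesis using \<open>1/m0 u > 0\<close> by linarith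
        next
          case False
          then have "\<bar>x$u\<bar> * 1 \<le> \<bar>x$u\<bar> * \<bar>x$u\<bar>"
            by (intro mult_left_mono) auto
          then have "\<bar>x$u\<bar> \<le> \<bar>x$u\<bar> * \<bar>x$u\<bar>" by simp
          also have "\<dots> = (x$u)^2" by (simp add: power2_eq_square abs_mult_self_eq)
          finally show ?thesis using y by linarith
        qed
      qed
      then have "(\<Sum>u\<in>UNIV. \<bar>x$u\<bar>) \<le> (\<Sum>u\<in>UNIV. 1 + 1 / m0 u)" by (intro sum_mono) auto
      then show ?thesis using norm_le_l1_cart[of x] by linarith
    qed
    then show ?thesis unfolding bounded_iff by blast
  qed
  have cpt: "compact S" using clo bnd compact_eq_bounded_closed by blast
  obtain g0 where "mz g0" "N g0 = 1" using two_vertices_nonconst[OF ab] by blast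
  then have "vec_lambda g0 \<in> S" by (simp add: S_def vec_fun)
  then have ne: "S \<noteq> {}" by blast
  obtain xs where xs: "xs \<in> S" "\<forall>y\<in>S. Q m1 (($) xs) \<le> Q m1 (($) y)"
    using continuous_attains_inf[OF cpt ne continuous_on_subset[OF cont_Q subset_UNIV]] by blast
  define h where "h = ($) xs"
  define \<mu> where "\<mu> = Q m1 h"
  have hS: "mz h" "N h = 1" using xs(1) by (auto simp: S_def h_def)
  have P: "\<forall>g. mz g \<longrightarrow> \<mu> * N g \<le> Q m1 g"
  proof (intro allI impI)
    fix g assume g: "mz g"
    show "\<mu> * N g \<le> Q m1 g"
    proof (cases "N g = 0")
      case True then show ?thesis using Q_nonneg[OF nn] by simp
    next
      case False
      then have Np: "N g > 0" using N_nonneg[of g] by linarith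
      define g' where "g' = (\<lambda>u. (1 / sqrt (N g)) * g u)"
      have "mz g'" unfolding g'_def by (rule mz_scale[OF g])
      moreover have "N g' = 1" unfolding g'_def N_scale using Np by (simp add: power_divide)
      ultimately have "vec_lambda g' \<in> S" by (simp add: S_def vec_fun)
      then have "\<mu> \<le> Q m1 g'" using xs(2) by (force simp: \<mu>_def h_def vec_fun)
      also have "Q m1 g' = Q m1 g / N g" unfolding g'_def Q_scale using Np by (simp add: power_divide)
      finally show ?thesis using Np by (simp add: pos_le_divide_eq mult.commute)
    qed
  qed
  have eig: "laplacian E m0 m1 h u = \<mu> * h u" for u
    using variational[OF P hS(1)] hS(2) by (simp add: \<mu>_def)
  have \<mu>pos: "\<mu> > 0"
  proof -
    have "\<mu> \<ge> 0" using Q_nonneg[OF nn] by (simp add: \<mu>_def)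
    moreover have "\<mu> \<noteq> 0"
    proof
      assume "\<mu> = 0"
      then have hc: "h u = h a" for u using Q_zero_const[OF nn con] by (simp add: \<mu>_def)
      have "(\<Sum>u\<in>UNIV. m0 u * h u) = (\<Sum>u\<in>UNIV. m0 u * h a)" by (metis hc)
      also have "\<dots> = M * h a" by (simp add: M_def total_mass_def sum_distrib_right)
      finally have "h a = 0" using hS(1) M_pos by (simp add: mz_def)
      then have "h u = 0" for u using hc by metis
      then have "N h = 0" by (simp add: N_def)
      then show False using hS(2) by simp
    qed
    ultimately show ?thesis by simp
  qed
  have h0: "h \<noteq> (\<lambda>_. 0)" using hS(2) by (auto simp: N_def)
  have "lambda1 E m0 m1 = \<mu>"
    unfolding lambda1_def
  proof (rule cInf_eq_minimum)
    show "\<mu> \<in> {ev. ev > 0 \<and> (\<exists>f. f \<noteq> (\<lambda>_. 0) \<and> laplacian E m0 m1 f = (\<lambda>u. ev * f u))}"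
      using \<mu>pos h0 eig by (auto simp: fun_eq_iff)
  next
    fix ev :: real assume "ev \<in> {ev. ev > 0 \<and> (\<exists>f. f \<noteq> (\<lambda>_. 0) \<and> laplacian E m0 m1 f = (\<lambda>u. ev * f u))}"
    then obtain f where ev: "ev > 0" "f \<noteq> (\<lambda>_. 0)" "laplacian E m0 m1 f = (\<lambda>u. ev * f u)" by blast
    have "0 = (\<Sum>u\<in>UNIV. m0 u * (ev * f u))" using sum_lap[of m1 f] ev(3) by simp
    also have "\<dots> = ev * (\<Sum>u\<in>UNIV. m0 u * f u)" by (simp add: sum_distrib_left algebra_simps)
    finally have mzf: "mz f" using ev(1) by (simp add: mz_def)
    have "Q m1 f = IP (laplacian E m0 m1 f) f" by (simp add: Q_B B_parts)
    also have "\<dots> = ev * N f" by (simp add: ev(3) IP_def N_def sum_distrib_left power2_eq_square algebra_simps)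
    finally have Qf: "Q m1 f = ev * N f" .
    have "N f \<noteq> 0" using ev(2) N_zero[of f] by auto
    then have Np: "N f > 0" using N_nonneg[of f] by linarith
    have "\<mu> * N f \<le> ev * N f" using P mzf Qf by metis
    then show "\<mu> \<le> ev" using Np by simp
  qed
  then show ?thesis using P \<mu>pos hS by (auto simp: \<mu>_def)
qed

lemma rayleigh_gen:
  assumes nn: "\<forall>e\<in>E. m1 e \<ge> 0" and con: "graph_connected (support_edges E m1)" and ab: "a \<noteq> (b::'v)"
  shows "lambda1 E m0 m1 * N (\<lambda>u. f u - bar m0 f) \<le> Q m1 f"
proof -
  have "lambda1 E m0 m1 * N (\<lambda>u. f u - bar m0 f) \<le> Q m1 (\<lambda>u. f u - bar m0 f)"
    using lambda1_char[OF nn con ab] mz_centered[of f] by blast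
  then show ?thesis using Q_shift[of m1 f "bar m0 f"] by simp
qed

lemma edge_sum: fixes k :: "'v set \<Rightarrow> real" shows "(\<Sum>u\<in>UNIV. \<Sum>v\<in>UNIV. (if {u,v} \<in> E then k {u,v} else 0)) = 2 * (\<Sum>e\<in>E. k e)"
proof -
  define P where "P = {p::'v\<times>'v. {fst p, snd p} \<in> E}"
  define g where "g = (\<lambda>p::'v\<times>'v. {fst p, snd p})"
  have "(\<Sum>u\<in>UNIV. \<Sum>v\<in>UNIV. (if {u,v} \<in> E then k {u,v} else 0))
      = (\<Sum>p\<in>UNIV. if {fst p, snd p} \<in> E then k {fst p, snd p} else 0)"
    by (simp add: sum.cartesian_product split_beta)
  also have "\<dots> = sum (\<lambda>p. k {fst p, snd p}) P"
    using sum.inter_filter[of UNIV "\<lambda>p. k {fst p, snd p}" "\<lambda>p. {fst p, snd p} \<in> E"] by (simp add: P_def)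
  also have "\<dots> = (\<Sum>e\<in>E. sum (\<lambda>p. k {fst p, snd p}) {p\<in>P. g p = e})"
    by (rule sum.group[symmetric]) (auto simp: P_def g_def)
  also have "\<dots> = (\<Sum>e\<in>E. 2 * k e)"
  proof (rule sum.cong[OF refl])
    fix e assume e: "e \<in> E"
    then have "card e = 2" using sg by (simp add: simple_graph_def)
    then obtain a b where ab: "e = {a,b}" "a \<noteq> b" by (auto simp: card_2_iff)
    have "{p\<in>P. g p = e} = {(a,b),(b,a)}"
    proof (rule set_eqI)
      fix p :: "'v \<times> 'v"
      obtain x y where p: "p = (x, y)" by (cases p)
      have "{x,y} = {a,b} \<longleftrightarrow> (x = a \<and> y = b \<or> x = b \<and> y = a)" by (rule doubleton_eq_iff)
      then show "p \<in> {p\<in>P. g p = e} \<longleftrightarrow> p \<in> {(a,b),(b,a)}"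
        using e unfolding p P_def g_def ab by auto
    qed
    then show "sum (\<lambda>p. k {fst p, snd p}) {p\<in>P. g p = e} = 2 * k e" using ab by (simp add: insert_commute)
  qed
  finally show ?thesis by (simp add: sum_distrib_left)
qed

lemma A_edge_sum: fixes k :: "'v set \<Rightarrow> real" shows "(\<Sum>u\<in>UNIV. \<Sum>v\<in>UNIV. A m1 u v * k {u,v}) = 2 * (\<Sum>e\<in>E. m1 e * k e)"
proof -
  have "(\<Sum>u\<in>UNIV. \<Sum>v\<in>UNIV. A m1 u v * k {u,v}) = (\<Sum>u\<in>UNIV. \<Sum>v\<in>UNIV. (if {u,v} \<in> E then m1 {u,v} * k {u,v} else 0))"
    by (intro sum.cong refl) (simp add: A_def)
  then show ?thesis using edge_sum[of "\<lambda>e. m1 e * k e"] by simp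
qed

lemma norm_sq_vec: "(norm (x::real^'n))^2 = (\<Sum>i\<in>UNIV. (x$i)^2)"
  by (simp add: norm_vec_def L2_set_def sum_nonneg)

lemma bar_comp: "bar m0 \<phi> $ i = bar m0 (\<lambda>u. \<phi> u $ i)"
  by (simp add: bar_def sum_component)

lemma lap_comp: "laplacian E m0 m1 \<phi> u $ i = laplacian E m0 m1 (\<lambda>v. \<phi> v $ i) u"
  by (simp add: lap_eq sum_component)

lemma Q_vec: "(\<Sum>i\<in>UNIV. Q m1 (\<lambda>u. \<phi> u $ i)) = (\<Sum>u\<in>UNIV. \<Sum>v\<in>UNIV. A m1 u v * (norm (\<phi> u - \<phi> v))^2) / 2"
proof -
  have "(\<Sum>i\<in>UNIV. Q m1 (\<lambda>u. \<phi> u $ i)) = (\<Sum>i\<in>UNIV. \<Sum>u\<in>UNIV. \<Sum>v\<in>UNIV. A m1 u v * (\<phi> u $ i - \<phi> v $ i)^2) / 2"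
    by (simp add: Q_def sum_divide_distrib)
  also have "(\<Sum>i\<in>UNIV. \<Sum>u\<in>UNIV. \<Sum>v\<in>UNIV. A m1 u v * (\<phi> u $ i - \<phi> v $ i)^2)
     = (\<Sum>u\<in>UNIV. \<Sum>i\<in>UNIV. \<Sum>v\<in>UNIV. A m1 u v * (\<phi> u $ i - \<phi> v $ i)^2)"
    by (rule sum.swap)
  also have "\<dots> = (\<Sum>u\<in>UNIV. \<Sum>v\<in>UNIV. \<Sum>i\<in>UNIV. A m1 u v * (\<phi> u $ i - \<phi> v $ i)^2)"
    by (intro sum.cong refl sum.swap)
  also have "\<dots> = (\<Sum>u\<in>UNIV. \<Sum>v\<in>UNIV. A m1 u v * (norm (\<phi> u - \<phi> v))^2)"
    by (simp add: norm_sq_vec sum_distrib_left)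
  finally show ?thesis .
qed

lemma var_vec: "(\<Sum>i\<in>UNIV. N (\<lambda>u. \<phi> u $ i - bar m0 \<phi> $ i))
   = (\<Sum>u\<in>UNIV. m0 u * (norm (\<phi> u))^2) - M * (norm (bar m0 \<phi>))^2"
proof -
  have "(\<Sum>i\<in>UNIV. N (\<lambda>u. \<phi> u $ i - bar m0 \<phi> $ i)) = (\<Sum>i\<in>UNIV. N (\<lambda>u. \<phi> u $ i) - M * (bar m0 \<phi> $ i)^2)"
    by (simp add: bar_comp var_eq)
  also have "\<dots> = (\<Sum>i\<in>UNIV. \<Sum>u\<in>UNIV. m0 u * (\<phi> u $ i)^2) - M * (norm (bar m0 \<phi>))^2"
    by (simp add: sum_subtractf N_def norm_sq_vec sum_distrib_left)
  also have "(\<Sum>i\<in>UNIV. \<Sum>u\<in>UNIV. m0 u * (\<phi> u $ i)^2) = (\<Sum>u\<in>UNIV. m0 u * (norm (\<phi> u))^2)"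
    by (subst sum.swap) (simp add: norm_sq_vec sum_distrib_left)
  finally show ?thesis .
qed

lemma energy_bound:
  assumes adm: "admissible_weight E d m1" and phi: "admissible_map E m0 d \<phi>"
  shows "(\<Sum>u\<in>UNIV. \<Sum>v\<in>UNIV. A m1 u v * (norm (\<phi> u - \<phi> v))^2) / 2 \<le> Dsq E d"
proof -
  have nn: "\<forall>e\<in>E. m1 e \<ge> 0" using adm by (simp add: admissible_weight_def)
  have "(\<Sum>u\<in>UNIV. \<Sum>v\<in>UNIV. A m1 u v * (norm (\<phi> u - \<phi> v))^2) \<le> (\<Sum>u\<in>UNIV. \<Sum>v\<in>UNIV. A m1 u v * (d {u,v})^2)"
  proof (intro sum_mono)
    fix u v
    show "A m1 u v * (norm (\<phi> u - \<phi> v))^2 \<le> A m1 u v * (d {u,v})^2"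
    proof (cases "{u,v} \<in> E")
      case True
      then have "norm (\<phi> u - \<phi> v) \<le> d {u,v}" using phi by (simp add: admissible_map_def)
      then have "(norm (\<phi> u - \<phi> v))^2 \<le> (d {u,v})^2" by (intro power_mono) auto
      then show ?thesis using A_nonneg[OF nn] by (intro mult_left_mono) auto
    next
      case False then show ?thesis by (simp add: A_def)
    qed
  qed
  also have "\<dots> = 2 * Dsq E d" using A_edge_sum[of m1 "\<lambda>e. (d e)^2"] adm by (simp add: admissible_weight_def)
  finally show ?thesis by simp
qed

lemma main_ineq:
  assumes adm: "admissible_weight E d m1" and phi: "admissible_map E m0 d \<phi>" and ab: "a \<noteq> (b::'v)"
  shows "lambda1 E m0 m1 * (M - M * (norm (bar m0 \<phi>))^2) \<le> Dsq E d"
proof -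
  have nn: "\<forall>e\<in>E. m1 e \<ge> 0" and con: "graph_connected (support_edges E m1)"
    using adm by (auto simp: admissible_weight_def)
  have "lambda1 E m0 m1 * (M - M * (norm (bar m0 \<phi>))^2) = lambda1 E m0 m1 * (\<Sum>i\<in>UNIV. N (\<lambda>u. \<phi> u $ i - bar m0 \<phi> $ i))"
    using phi by (simp add: var_vec admissible_map_def M_def)
  also have "\<dots> = (\<Sum>i\<in>UNIV. lambda1 E m0 m1 * N (\<lambda>u. \<phi> u $ i - bar m0 (\<lambda>u. \<phi> u $ i)))"
    by (simp add: sum_distrib_left bar_comp)
  also have "\<dots> \<le> (\<Sum>i\<in>UNIV. Q m1 (\<lambda>u. \<phi> u $ i))"
    by (intro sum_mono rayleigh_gen[OF nn con ab])
  also have "\<dots> \<le> Dsq E d" unfolding Q_vec by (rule energy_bound[OF adm phi])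
  finally show ?thesis .
qed
end


locale gs2 = gs E m0 for E :: "'v::finite set set" and m0 +
  fixes d :: "'v set \<Rightarrow> real" and a b :: 'v
  assumes conn: "graph_connected E" and dpos: "\<forall>e\<in>E. d e > 0" and ab: "a \<noteq> b"
begin

lemma E_ne: "E \<noteq> {}"
proof -
  have "(a, b) \<in> (edge_rel E)\<^sup>*" using conn by (simp add: graph_connected_def)
  then obtain y where "(a, y) \<in> edge_rel E" using ab by (cases rule: converse_rtranclE) auto
  then show ?thesis by (auto simp: edge_rel_def)
qed

lemma Dpos: "Dsq E d > 0"
  unfolding Dsq_def using E_ne dpos by (intro sum_pos) auto

definition one where "one = (\<lambda>_::'v set. 1::real)"

lemma one_adm: "admissible_weight E d one"
  by (simp add: admissible_weight_def one_def support_edges_def Dsq_def conn)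

definition Lset where "Lset = {lambda1 E m0 m1 | m1. admissible_weight E d m1}"

lemma sigma_Lset: "sigma E m0 d = Sup Lset" by (simp add: sigma_def Lset_def)

lemma Lset_ne: "Lset \<noteq> {}" using one_adm by (auto simp: Lset_def)

definition fa where "fa = (\<lambda>u. if u = a then 1 else (0::real))"
definition Nv where "Nv = N (\<lambda>u. fa u - bar m0 fa)"
definition C0 where "C0 = (\<Sum>e\<in>E. 1/(d e)^2) * Dsq E d / Nv"

lemma Nv_pos: "Nv > 0"
proof -
  have "Nv \<noteq> 0"
  proof
    assume "Nv = 0"
    then have "fa a - bar m0 fa = 0" "fa b - bar m0 fa = 0" using N_zero unfolding Nv_def by blast+
    then show False using ab by (simp add: fa_def)
  qed
  then show ?thesis using N_nonneg[of "\<lambda>u. fa u - bar m0 fa"] by (simp add: Nv_def)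
qed

lemma adm_nn: "admissible_weight E d m1 \<Longrightarrow> \<forall>e\<in>E. m1 e \<ge> 0"
  by (simp add: admissible_weight_def)
lemma adm_con: "admissible_weight E d m1 \<Longrightarrow> graph_connected (support_edges E m1)"
  by (simp add: admissible_weight_def)
lemma adm_sum: "admissible_weight E d m1 \<Longrightarrow> (\<Sum>e\<in>E. m1 e * (d e)\<^sup>2) = Dsq E d"
  by (simp add: admissible_weight_def)

lemma lambda1_bound:
  assumes adm: "admissible_weight E d m1"
  shows "lambda1 E m0 m1 \<le> C0"
proof -
  note nn = adm_nn[OF adm] and con = adm_con[OF adm]
  define C where "C = (\<Sum>e\<in>E. 1/(d e)^2)"
  have r: "lambda1 E m0 m1 * Nv \<le> Q m1 fa" unfolding Nv_def by (rule rayleigh_gen[OF nn con ab])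
  have "(\<Sum>u\<in>UNIV. \<Sum>v\<in>UNIV. A m1 u v * (fa u - fa v)^2) \<le> (\<Sum>u\<in>UNIV. \<Sum>v\<in>UNIV. A m1 u v * (\<lambda>_. 1) {u,v})"
  proof (intro sum_mono)
    fix u v
    have "(fa u - fa v)^2 \<le> 1" by (simp add: fa_def)
    then show "A m1 u v * (fa u - fa v)^2 \<le> A m1 u v * (\<lambda>_. 1) {u,v}"
      using A_nonneg[OF nn] by (simp add: mult_left_le)
  qed
  also have "\<dots> = 2 * (\<Sum>e\<in>E. m1 e)" using A_edge_sum[of m1 "\<lambda>_. 1"] by simp
  finally have q: "Q m1 fa \<le> (\<Sum>e\<in>E. m1 e)" by (simp add: Q_def)
  have "(\<Sum>e\<in>E. m1 e) \<le> (\<Sum>e\<in>E. (m1 e * (d e)^2) * C)"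
  proof (intro sum_mono)
    fix e assume e: "e \<in> E"
    have dp: "d e > 0" using dpos e by simp
    have "1/(d e)^2 \<le> C" unfolding C_def
      by (rule member_le_sum) (use e dpos in auto)
    then have "(m1 e * (d e)^2) * (1/(d e)^2) \<le> (m1 e * (d e)^2) * C"
      using nn e by (intro mult_left_mono) auto
    then show "m1 e \<le> (m1 e * (d e)^2) * C" using dp by simp
  qed
  also have "\<dots> = C * (\<Sum>e\<in>E. m1 e * (d e)^2)" by (simp add: sum_distrib_left mult.commute)
  also have "\<dots> = C * Dsq E d" using adm_sum[OF adm] by simp
  finally have "lambda1 E m0 m1 * Nv \<le> C * Dsq E d" using r q by linarith
  then show ?thesis using Nv_pos by (simp add: C0_def C_def pos_le_divide_eq)
qed

lemma Lset_bdd: "bdd_above Lset"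
  unfolding bdd_above_def Lset_def using lambda1_bound by blast

lemma le_sigma: "admissible_weight E d m1 \<Longrightarrow> lambda1 E m0 m1 \<le> sigma E m0 d"
  unfolding sigma_Lset by (rule cSup_upper[OF _ Lset_bdd]) (auto simp: Lset_def)

lemma lambda1_pos: "admissible_weight E d m1 \<Longrightarrow> lambda1 E m0 m1 > 0"
  using lambda1_char[OF adm_nn adm_con ab] by blast

lemma sigma_pos: "sigma E m0 d > 0"
  using lambda1_pos[OF one_adm] le_sigma[OF one_adm] by linarith

lemma lower:
  assumes phi: "admissible_map E m0 d \<phi>"
  shows "1 - (Dsq E d / M) / sigma E m0 d \<le> (norm (bar m0 \<phi>))^2"
proof (cases "(norm (bar m0 \<phi>))^2 \<ge> 1")
  case True
  have "(Dsq E d / M) / sigma E m0 d > 0" using Dpos M_pos sigma_pos by simp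
  then show ?thesis using True by linarith
next
  case False
  define b2 where "b2 = (norm (bar m0 \<phi>))^2"
  have pos: "M - M * b2 > 0" using False M_pos by (simp add: b2_def)
  have "sigma E m0 d \<le> Dsq E d / (M - M * b2)"
    unfolding sigma_Lset
  proof (rule cSup_least[OF Lset_ne])
    fix x assume "x \<in> Lset"
    then obtain m1 where m1: "admissible_weight E d m1" "x = lambda1 E m0 m1" by (auto simp: Lset_def)
    have "x * (M - M * b2) \<le> Dsq E d" using main_ineq[OF m1(1) phi ab] m1(2) by (simp add: b2_def)
    then show "x \<le> Dsq E d / (M - M * b2)" using pos by (simp add: pos_le_divide_eq)
  qed
  then have "(Dsq E d / M) / (Dsq E d / (M - M * b2)) \<le> (Dsq E d / M) / sigma E m0 d"
    using sigma_pos Dpos M_pos pos by (intro divide_left_mono) auto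
  also have "(Dsq E d / M) / (Dsq E d / (M - M * b2)) = 1 - b2"
    using Dpos M_pos pos by (simp add: field_simps)
  finally show ?thesis by (simp add: b2_def)
qed

definition phi0 :: "'v \<Rightarrow> real^'v" where "phi0 = (\<lambda>_. axis a 1)"

lemma phi0_adm: "admissible_map E m0 d phi0"
  using dpos by (auto simp: admissible_map_def phi0_def norm_axis_1 total_mass_def less_imp_le)

definition Dset where "Dset = {(norm (bar m0 \<phi>))\<^sup>2 | \<phi>. admissible_map E m0 d \<phi>}"

lemma delta_Dset: "delta E m0 d = Inf Dset" by (simp add: delta_def Dset_def)

lemma Dset_ne: "Dset \<noteq> {}" using phi0_adm by (auto simp: Dset_def)
lemma Dset_bdd: "bdd_below Dset" unfolding bdd_below_def Dset_def
  by (rule exI[of _ 0]) auto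

lemma delta_ge: "1 - (Dsq E d / M) / sigma E m0 d \<le> delta E m0 d"
  unfolding delta_Dset
proof (rule cInf_greatest[OF Dset_ne])
  fix x assume "x \<in> Dset"
  then obtain \<phi> where "admissible_map E m0 d \<phi>" "x = (norm (bar m0 \<phi>))^2" by (auto simp: Dset_def)
  then show "1 - (Dsq E d / M) / sigma E m0 d \<le> x" using lower by simp
qed

lemma delta_le: "admissible_map E m0 d \<phi> \<Longrightarrow> delta E m0 d \<le> (norm (bar m0 \<phi>))^2"
  unfolding delta_Dset by (rule cInf_lower[OF _ Dset_bdd]) (auto simp: Dset_def)

lemma suff:
  assumes adm: "admissible_weight E d m1" and phi: "admissible_map E m0 d \<phi>"
    and c1: "\<forall>u v. {u, v} \<in> E \<longrightarrow> m1 {u, v} * ((d {u, v})\<^sup>2 - (norm (\<phi> u - \<phi> v))\<^sup>2) = 0"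
    and c2: "\<forall>u. laplacian E m0 m1 \<phi> u = lambda1 E m0 m1 *\<^sub>R (\<phi> u - bar m0 \<phi>)"
  shows "delta E m0 d = 1 - (Dsq E d / M) / sigma E m0 d"
proof -
  define lam where "lam = lambda1 E m0 m1"
  define b2 where "b2 = (norm (bar m0 \<phi>))^2"
  have Qi: "Q m1 (\<lambda>u. \<phi> u $ i) = lam * N (\<lambda>u. \<phi> u $ i - bar m0 \<phi> $ i)" for i
  proof -
    define fi where "fi = (\<lambda>u. \<phi> u $ i)"
    define ci where "ci = bar m0 fi"
    have L: "laplacian E m0 m1 fi u = lam * (fi u - ci)" for u
      using arg_cong[OF c2[rule_format, of u], of "\<lambda>x. x $ i"]
      by (simp add: lap_comp bar_comp fi_def ci_def lam_def)
    have "Q m1 fi = B m1 fi (\<lambda>u. fi u - ci)" by (simp add: Q_B B_shift)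
    also have "\<dots> = IP (laplacian E m0 m1 fi) (\<lambda>u. fi u - ci)" by (simp add: B_parts)
    also have "\<dots> = lam * N (\<lambda>u. fi u - ci)"
      by (simp add: L IP_def N_def sum_distrib_left power2_eq_square algebra_simps)
    finally show ?thesis by (simp add: fi_def ci_def bar_comp)
  qed
  have "(\<Sum>i\<in>UNIV. Q m1 (\<lambda>u. \<phi> u $ i)) = lam * (M - M * b2)"
    using phi by (simp add: Qi sum_distrib_left[symmetric] var_vec admissible_map_def M_def b2_def)
  moreover have "(\<Sum>i\<in>UNIV. Q m1 (\<lambda>u. \<phi> u $ i)) = Dsq E d"
  proof -
    have "(\<Sum>u\<in>UNIV. \<Sum>v\<in>UNIV. A m1 u v * (norm (\<phi> u - \<phi> v))^2) = (\<Sum>u\<in>UNIV. \<Sum>v\<in>UNIV. A m1 u v * (d {u,v})^2)"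
    proof (intro sum.cong refl)
      fix u v
      show "A m1 u v * (norm (\<phi> u - \<phi> v))^2 = A m1 u v * (d {u,v})^2"
      proof (cases "{u,v} \<in> E")
        case True
        then have "m1 {u, v} * ((d {u, v})\<^sup>2 - (norm (\<phi> u - \<phi> v))\<^sup>2) = 0" using c1 by blast
        then show ?thesis using True by (auto simp: A_def algebra_simps)
      next
        case False then show ?thesis by (simp add: A_def)
      qed
    qed
    also have "\<dots> = 2 * Dsq E d" using A_edge_sum[of m1 "\<lambda>e. (d e)^2"] adm_sum[OF adm] by simp
    finally show ?thesis by (simp add: Q_vec)
  qed
  ultimately have eq: "lam * (M - M * b2) = Dsq E d" by simp
  have lp: "lam > 0" using lambda1_pos[OF adm] by (simp add: lam_def)
  have ls: "lam \<le> sigma E m0 d" using le_sigma[OF adm] by (simp add: lam_def)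
  have "M - M * b2 = Dsq E d / lam" using eq lp by (simp add: field_simps)
  also have "\<dots> \<ge> Dsq E d / sigma E m0 d" using lp ls Dpos by (intro divide_left_mono) auto
  finally have "b2 \<le> 1 - (Dsq E d / M) / sigma E m0 d" using M_pos sigma_pos by (simp add: field_simps)
  then show ?thesis using delta_ge delta_le[OF phi] by (simp add: b2_def)
qed


lemma vec_fun2: "(($) (vec_lambda g)) = g"
  by (rule ext) simp

lemma sq_bound:
  fixes y K :: real
  assumes "y^2 \<le> K"
  shows "\<bar>y\<bar> \<le> 1 + K"
proof (cases "\<bar>y\<bar> \<le> 1")
  case True then show ?thesis using assms by (smt (verit) zero_le_power2)
next
  case False
  then have "\<bar>y\<bar> * 1 \<le> \<bar>y\<bar> * \<bar>y\<bar>" by (intro mult_left_mono) auto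
  also have "\<dots> = y^2" by (simp add: power2_eq_square abs_mult_self_eq)
  finally show ?thesis using assms by linarith
qed

lemma delta_attained: "\<exists>\<phi>. admissible_map E m0 d \<phi> \<and> delta E m0 d = (norm (bar m0 \<phi>))^2"
proof -
  define T where "T = {\<Phi>::real^'v^'v. admissible_map E m0 d (($) \<Phi>)}"
  define T1 where "T1 = {\<Phi>::real^'v^'v. (\<Sum>u\<in>UNIV. m0 u * (norm (\<Phi>$u))^2) = total_mass m0}"
  define T2 where "T2 = (\<Inter>p\<in>{p. {fst p, snd p} \<in> E}. {\<Phi>::real^'v^'v. norm (\<Phi> $ fst p - \<Phi> $ snd p) \<le> d {fst p, snd p}})"
  have TT: "T = T1 \<inter> T2" by (auto simp: T_def T1_def T2_def admissible_map_def)
  have c1: "closed T1" unfolding T1_def by (intro closed_Collect_eq continuous_intros)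
  have c2: "closed T2" unfolding T2_def by (intro closed_INT ballI closed_Collect_le continuous_intros)
  have bnd: "bounded T"
  proof -
    have "norm \<Phi> \<le> (\<Sum>u\<in>UNIV. 1 + M / m0 u)" if "\<Phi> \<in> T" for \<Phi>
    proof -
      have "norm (\<Phi>$u) \<le> 1 + M / m0 u" for u
      proof -
        have "m0 u * (norm (\<Phi>$u))^2 \<le> (\<Sum>u\<in>UNIV. m0 u * (norm (\<Phi>$u))^2)"
          by (rule member_le_sum) (simp_all add: m0pos less_imp_le)
        then have "m0 u * (norm (\<Phi>$u))^2 \<le> M" using that by (simp add: T_def admissible_map_def M_def)
        then have "(norm (\<Phi>$u))^2 \<le> M / m0 u" using m0pos[of u] by (simp add: field_simps)
        then show ?thesis using sq_bound by fastforce
      qed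
      then have "(\<Sum>u\<in>UNIV. norm (\<Phi>$u)) \<le> (\<Sum>u\<in>UNIV. 1 + M / m0 u)" by (intro sum_mono) auto
      moreover have "norm \<Phi> \<le> (\<Sum>u\<in>UNIV. norm (\<Phi>$u))"
        unfolding norm_vec_def by (rule L2_set_le_sum) simp
      ultimately show ?thesis by linarith
    qed
    then show ?thesis unfolding bounded_iff by blast
  qed
  have cpt: "compact T" using c1 c2 bnd TT compact_eq_bounded_closed by auto
  have "vec_lambda phi0 \<in> T" using phi0_adm by (simp add: T_def vec_fun2)
  then have ne: "T \<noteq> {}" by blast
  have cont: "continuous_on T (\<lambda>\<Phi>::real^'v^'v. (norm (bar m0 (($) \<Phi>)))^2)"
    unfolding bar_def by (intro continuous_intros)
  obtain \<Phi> where \<Phi>: "\<Phi> \<in> T" "\<forall>y\<in>T. (norm (bar m0 (($) \<Phi>)))^2 \<le> (norm (bar m0 (($) y)))^2"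
    using continuous_attains_inf[OF cpt ne cont] by blast
  have adm: "admissible_map E m0 d (($) \<Phi>)" using \<Phi>(1) by (simp add: T_def)
  have "delta E m0 d = (norm (bar m0 (($) \<Phi>)))^2"
    unfolding delta_Dset
  proof (rule cInf_eq_minimum)
    show "(norm (bar m0 (($) \<Phi>)))^2 \<in> Dset" using adm by (auto simp: Dset_def)
  next
    fix x assume "x \<in> Dset"
    then obtain \<phi> where "admissible_map E m0 d \<phi>" "x = (norm (bar m0 \<phi>))^2" by (auto simp: Dset_def)
    moreover then have "vec_lambda \<phi> \<in> T" by (simp add: T_def vec_fun2)
    ultimately show "(norm (bar m0 (($) \<Phi>)))^2 \<le> x" using \<Phi>(2) by (metis vec_fun2)
  qed
  then show ?thesis using adm by blast
qed

lemma Q_cong: "\<forall>e\<in>E. m1 e = m2 e \<Longrightarrow> Q m1 f = Q m2 f"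
  unfolding Q_def A_def by (intro arg_cong[where f="\<lambda>x. x / 2"] sum.cong refl) auto

lemma Q_tendsto:
  fixes X :: "nat \<Rightarrow> real^('v set)"
  assumes lim: "X \<longlonglongrightarrow> l"
  shows "(\<lambda>n. Q (($) (X n)) f) \<longlonglongrightarrow> Q (($) l) f"
proof -
  have At: "(\<lambda>n. A (($) (X n)) u v) \<longlonglongrightarrow> A (($) l) u v" for u v
    by (cases "{u,v} \<in> E") (auto simp: A_def intro: tendsto_vec_nth lim)
  show ?thesis unfolding Q_def by (intro tendsto_intros At) auto
qed

lemma sigma_attained: "\<exists>ms. admissible_weight E d ms \<and> lambda1 E m0 ms = sigma E m0 d"
proof -
  define \<sigma> where "\<sigma> = sigma E m0 d"
  have \<sigma>pos: "\<sigma> > 0" using sigma_pos by (simp add: \<sigma>_def)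
  define K where "K = {w::real^('v set). (\<forall>e\<in>E. 0 \<le> w$e) \<and> (\<forall>e. e \<notin> E \<longrightarrow> w$e = 0) \<and> (\<Sum>e\<in>E. w$e * (d e)^2) = Dsq E d}"
  have KK: "K = (\<Inter>e\<in>E. {w. 0 \<le> w$e}) \<inter> (\<Inter>e\<in>-E. {w. w$e = 0}) \<inter> {w. (\<Sum>e\<in>E. w$e * (d e)^2) = Dsq E d}"
    by (auto simp: K_def)
  have clo: "closed K" unfolding KK
    by (intro closed_Int closed_INT ballI closed_Collect_le closed_Collect_eq continuous_intros)
  have bnd: "bounded K"
  proof -
    have "norm w \<le> (\<Sum>e\<in>UNIV. if e \<in> E then Dsq E d / (d e)^2 else 0)" if "w \<in> K" for w
    proof -
      have "\<bar>w$e\<bar> \<le> (if e \<in> E then Dsq E d / (d e)^2 else 0)" for e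
      proof (cases "e \<in> E")
        case True
        have dp: "d e > 0" using dpos True by simp
        have "w$e * (d e)^2 \<le> (\<Sum>e\<in>E. w$e * (d e)^2)"
          by (rule member_le_sum) (use True that in \<open>auto simp: K_def\<close>)
        then have "w$e * (d e)^2 \<le> Dsq E d" using that by (simp add: K_def)
        then have "w$e \<le> Dsq E d / (d e)^2" using dp by (simp add: pos_le_divide_eq)
        moreover have "w$e \<ge> 0" using that True by (simp add: K_def)
        ultimately show ?thesis using True by simp
      next
        case False then show ?thesis using that by (simp add: K_def)
      qed
      then have "(\<Sum>e\<in>UNIV. \<bar>w$e\<bar>) \<le> (\<Sum>e\<in>UNIV. if e \<in> E then Dsq E d / (d e)^2 else 0)"
        by (intro sum_mono) auto
      then show ?thesis using norm_le_l1_cart[of w] by linarith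
    qed
    then show ?thesis unfolding bounded_iff by blast
  qed
  have sc: "seq_compact K" using clo bnd compact_eq_bounded_closed compact_imp_seq_compact by blast
  have "\<forall>n. \<exists>m1. admissible_weight E d m1 \<and> \<sigma> - inverse (real (Suc n)) < lambda1 E m0 m1"
  proof
    fix n
    have "\<sigma> - inverse (real (Suc n)) < Sup Lset" using sigma_Lset \<sigma>_def by simp
    then obtain x where "x \<in> Lset" "\<sigma> - inverse (real (Suc n)) < x"
      using less_cSup_iff[OF Lset_ne Lset_bdd] by blast
    then show "\<exists>m1. admissible_weight E d m1 \<and> \<sigma> - inverse (real (Suc n)) < lambda1 E m0 m1"
      by (auto simp: Lset_def)
  qed
  then obtain mm where mm: "\<And>n. admissible_weight E d (mm n)" "\<And>n. \<sigma> - inverse (real (Suc n)) < lambda1 E m0 (mm n)"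
    by metis
  define w where "w = (\<lambda>n. \<chi> e. if e \<in> E then mm n e else 0)"
  have wE: "\<forall>e\<in>E. w n $ e = mm n e" for n by (simp add: w_def)
  have wK: "w n \<in> K" for n
  proof -
    have "(\<Sum>e\<in>E. w n $ e * (d e)^2) = (\<Sum>e\<in>E. mm n e * (d e)^2)" by (intro sum.cong) (auto simp: w_def)
    also have "\<dots> = Dsq E d" using adm_sum[OF mm(1)] .
    finally show ?thesis using adm_nn[OF mm(1)] by (auto simp: K_def w_def)
  qed
  obtain l r where lK: "l \<in> K" and r: "strict_mono r" and lim: "(w \<circ> r) \<longlonglongrightarrow> l"
    using sc wK unfolding seq_compact_def by meson
  define ms where "ms = ($) l"
  have nn: "\<forall>e\<in>E. ms e \<ge> 0" using lK by (simp add: K_def ms_def)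
  have sm: "(\<Sum>e\<in>E. ms e * (d e)^2) = Dsq E d" using lK by (simp add: K_def ms_def)
  have key: "\<sigma> * N f \<le> Q ms f" if mzf: "mz f" for f
  proof -
    have l1: "(\<lambda>n. Q (($) (w (r n))) f) \<longlonglongrightarrow> Q ms f"
      unfolding ms_def using Q_tendsto[of "\<lambda>n. w (r n)" l f] lim by (simp add: o_def)
    have "(\<lambda>n. (\<sigma> - inverse (real (Suc n))) * N f) \<longlonglongrightarrow> (\<sigma> - 0) * N f"
      by (intro tendsto_intros LIMSEQ_inverse_real_of_nat)
    then have l2: "(\<lambda>n. (\<sigma> - inverse (real (Suc n))) * N f) \<longlonglongrightarrow> \<sigma> * N f" by simp
    have le: "(\<sigma> - inverse (real (Suc n))) * N f \<le> Q (($) (w (r n))) f" for n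
    proof -
      have "Q (($) (w (r n))) f = Q (mm (r n)) f" by (rule Q_cong) (simp add: wE)
      moreover have "lambda1 E m0 (mm (r n)) * N f \<le> Q (mm (r n)) f"
        using lambda1_char[OF adm_nn[OF mm(1)] adm_con[OF mm(1)] ab] mzf by blast
      moreover have "(\<sigma> - inverse (real (Suc n))) * N f \<le> lambda1 E m0 (mm (r n)) * N f"
      proof -
        have "inverse (real (Suc (r n))) \<le> inverse (real (Suc n))"
          using seq_suble[OF r, of n] by (intro le_imp_inverse_le) auto
        moreover have "\<sigma> - inverse (real (Suc (r n))) < lambda1 E m0 (mm (r n))" by (rule mm(2))
        ultimately have "\<sigma> - inverse (real (Suc n)) \<le> lambda1 E m0 (mm (r n))" by linarith
        then show ?thesis using N_nonneg[of f] by (intro mult_right_mono) auto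
      qed
      ultimately have "(\<sigma> - inverse (real (Suc n))) * N f \<le> lambda1 E m0 (mm (r n)) * N f" by blast
      then show ?thesis using \<open>Q (($) (w (r n))) f = Q (mm (r n)) f\<close>
        \<open>lambda1 E m0 (mm (r n)) * N f \<le> Q (mm (r n)) f\<close> by linarith
    qed
    show ?thesis using LIMSEQ_le[OF l2 l1] le by blast
  qed
  have con: "graph_connected (support_edges E ms)"
  proof (rule ccontr)
    assume "\<not> graph_connected (support_edges E ms)"
    then obtain u0 v0 where nc: "(u0, v0) \<notin> (edge_rel (support_edges E ms))\<^sup>*"
      by (auto simp: graph_connected_def)
    define R where "R = edge_rel (support_edges E ms)"
    define f where "f = (\<lambda>u. if (u0, u) \<in> R\<^sup>* then 1 else (0::real))"
    have Qf: "Q ms f = 0"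
    proof -
      have z: "A ms u v * (f u - f v)^2 = 0" for u v
      proof (cases "{u,v} \<in> E \<and> ms {u,v} > 0")
        case True
        then have "(u,v) \<in> R" "(v,u) \<in> R"
          by (auto simp: R_def edge_rel_def support_edges_def insert_commute)
        then have "f u = f v" unfolding f_def by (meson rtrancl_into_rtrancl)
        then show ?thesis by simp
      next
        case False
        then have "A ms u v = 0" using nn by (auto simp: A_def)
        then show ?thesis by simp
      qed
      have "(\<Sum>u\<in>UNIV. \<Sum>v\<in>UNIV. A ms u v * (f u - f v)^2) = 0"
        by (intro sum.neutral ballI z)
      then show ?thesis by (simp add: Q_def)
    qed
    define g where "g = (\<lambda>u. f u - bar m0 f)"
    have "\<sigma> * N g \<le> Q ms g" using key mz_centered[of f] by (simp add: g_def)
    also have "Q ms g = 0" using Qf Q_shift[of ms f "bar m0 f"] by (simp add: g_def)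
    finally have "N g \<le> 0" using \<sigma>pos by (simp add: mult_le_0_iff)
    then have "N g = 0" using N_nonneg[of g] by linarith
    then have "g u0 = 0" "g v0 = 0" using N_zero by blast+
    then have "f u0 = f v0" by (simp add: g_def)
    moreover have "f u0 = 1" by (simp add: f_def)
    moreover have "f v0 = 0" using nc by (simp add: f_def R_def)
    ultimately show False by simp
  qed
  have adm: "admissible_weight E d ms" using nn con sm by (simp add: admissible_weight_def)
  obtain h where h: "mz h" "N h = 1" "Q ms h = lambda1 E m0 ms"
    using lambda1_char[OF nn con ab] by blast
  have "\<sigma> \<le> lambda1 E m0 ms" using key[OF h(1)] h by simp
  moreover have "lambda1 E m0 ms \<le> \<sigma>" using le_sigma[OF adm] by (simp add: \<sigma>_def)
  ultimately show ?thesis using adm by (auto simp: \<sigma>_def)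
qed

lemma nec:
  assumes eq: "delta E m0 d = 1 - (Dsq E d / M) / sigma E m0 d"
  shows "\<exists>m1 \<phi>. admissible_weight E d m1 \<and> admissible_map E m0 d \<phi> \<and>
            (\<forall>u v. {u, v} \<in> E \<longrightarrow>
                m1 {u, v} * ((d {u, v})\<^sup>2 - (norm (\<phi> u - \<phi> v))\<^sup>2) = 0) \<and>
            (\<forall>u. laplacian E m0 m1 \<phi> u = lambda1 E m0 m1 *\<^sub>R (\<phi> u - bar m0 \<phi>))"
proof -
  obtain \<phi> where phi: "admissible_map E m0 d \<phi>" and dphi: "delta E m0 d = (norm (bar m0 \<phi>))^2"
    using delta_attained by blast
  obtain ms where adm: "admissible_weight E d ms" and lam: "lambda1 E m0 ms = sigma E m0 d"
    using sigma_attained by blast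
  note nn = adm_nn[OF adm] and con = adm_con[OF adm]
  define \<sigma> where "\<sigma> = sigma E m0 d"
  have \<sigma>pos: "\<sigma> > 0" using sigma_pos by (simp add: \<sigma>_def)
  define b2 where "b2 = (norm (bar m0 \<phi>))^2"
  define q where "q = (\<lambda>i. Q ms (\<lambda>u. \<phi> u $ i))"
  define v where "v = (\<lambda>i. N (\<lambda>u. \<phi> u $ i - bar m0 \<phi> $ i))"
  define E2 where "E2 = (\<Sum>u\<in>UNIV. \<Sum>v\<in>UNIV. A ms u v * (norm (\<phi> u - \<phi> v))^2)"
  have ray: "\<sigma> * v i \<le> q i" for i
    using rayleigh_gen[OF nn con ab, of "\<lambda>u. \<phi> u $ i"] lam by (simp add: q_def v_def bar_comp \<sigma>_def)
  have sv: "(\<Sum>i\<in>UNIV. v i) = M - M * b2"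
    using phi by (simp add: v_def var_vec admissible_map_def M_def b2_def)
  have b2eq: "b2 = 1 - (Dsq E d / M) / \<sigma>" using eq dphi by (simp add: b2_def \<sigma>_def)
  have lv: "\<sigma> * (M - M * b2) = Dsq E d" using b2eq M_pos \<sigma>pos by (simp add: field_simps)
  have sq: "(\<Sum>i\<in>UNIV. q i) = E2 / 2" by (simp add: q_def E2_def Q_vec)
  have eb: "E2 / 2 \<le> Dsq E d" unfolding E2_def by (rule energy_bound[OF adm phi])
  have diff: "(\<Sum>i\<in>UNIV. q i - \<sigma> * v i) = E2 / 2 - Dsq E d"
    using sq sv lv by (simp add: sum_subtractf sum_distrib_left[symmetric])
  have dnn: "\<forall>i\<in>UNIV. q i - \<sigma> * v i \<ge> 0" using ray by simp
  then have "(\<Sum>i\<in>UNIV. q i - \<sigma> * v i) \<ge> 0" by (intro sum_nonneg) auto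
  then have E2eq: "E2 = 2 * Dsq E d" using diff eb by linarith
  then have "(\<Sum>i\<in>UNIV. q i - \<sigma> * v i) = 0" using diff by simp
  then have qv: "q i = \<sigma> * v i" for i using dnn by (subst (asm) sum_nonneg_eq_0_iff) auto
  have c1: "\<forall>u v. {u, v} \<in> E \<longrightarrow> ms {u, v} * ((d {u, v})\<^sup>2 - (norm (\<phi> u - \<phi> v))\<^sup>2) = 0"
  proof -
    have tnn: "A ms u v * ((d {u, v})\<^sup>2 - (norm (\<phi> u - \<phi> v))\<^sup>2) \<ge> 0" for u v
    proof (cases "{u,v} \<in> E")
      case True
      then have "norm (\<phi> u - \<phi> v) \<le> d {u,v}" using phi by (simp add: admissible_map_def)
      then have "(norm (\<phi> u - \<phi> v))^2 \<le> (d {u,v})^2" by (intro power_mono) auto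
      then show ?thesis using A_nonneg[OF nn, of u v] by simp
    next
      case False then show ?thesis by (simp add: A_def)
    qed
    have "(\<Sum>u\<in>UNIV. \<Sum>v\<in>UNIV. A ms u v * ((d {u, v})\<^sup>2 - (norm (\<phi> u - \<phi> v))\<^sup>2))
        = (\<Sum>u\<in>UNIV. \<Sum>v\<in>UNIV. A ms u v * (d {u, v})\<^sup>2) - E2"
      unfolding E2_def by (simp add: right_diff_distrib sum_subtractf)
    also have "\<dots> = 0" using A_edge_sum[of ms "\<lambda>e. (d e)^2"] adm_sum[OF adm] E2eq by simp
    finally have s0: "(\<Sum>u\<in>UNIV. \<Sum>v\<in>UNIV. A ms u v * ((d {u, v})\<^sup>2 - (norm (\<phi> u - \<phi> v))\<^sup>2)) = 0" .
    have "\<forall>u\<in>UNIV. (\<Sum>v\<in>UNIV. A ms u v * ((d {u, v})\<^sup>2 - (norm (\<phi> u - \<phi> v))\<^sup>2)) = 0"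
      using s0 by (subst (asm) sum_nonneg_eq_0_iff) (auto intro!: sum_nonneg tnn)
    then have z: "A ms u v * ((d {u, v})\<^sup>2 - (norm (\<phi> u - \<phi> v))\<^sup>2) = 0" for u v
      by (subst (asm) sum_nonneg_eq_0_iff) (auto intro!: tnn)
    show ?thesis
    proof (intro allI impI)
      fix u v assume "{u, v} \<in> E"
      then show "ms {u, v} * ((d {u, v})\<^sup>2 - (norm (\<phi> u - \<phi> v))\<^sup>2) = 0"
        using z[of u v] by (simp add: A_def)
    qed
  qed
  have c2: "laplacian E m0 ms \<phi> u = lambda1 E m0 ms *\<^sub>R (\<phi> u - bar m0 \<phi>)" for u
  proof (rule vec_eq_iff[THEN iffD2], rule allI)
    fix i
    define h where "h = (\<lambda>u. \<phi> u $ i - bar m0 (\<lambda>u. \<phi> u $ i))"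
    have mzh: "mz h" unfolding h_def by (rule mz_centered)
    have "Q ms h = \<sigma> * N h"
      using qv[of i] Q_shift[of ms "\<lambda>u. \<phi> u $ i"] by (simp add: h_def q_def v_def bar_comp)
    moreover have P: "\<forall>g. mz g \<longrightarrow> \<sigma> * N g \<le> Q ms g"
      using lambda1_char[OF nn con ab] lam by (simp add: \<sigma>_def)
    ultimately have "laplacian E m0 ms h u = \<sigma> * h u" using variational[OF P mzh] by blast
    moreover have "laplacian E m0 ms h = laplacian E m0 ms (\<lambda>u. \<phi> u $ i)"
      unfolding h_def by (rule lap_shift)
    ultimately show "laplacian E m0 ms \<phi> u $ i = (lambda1 E m0 ms *\<^sub>R (\<phi> u - bar m0 \<phi>)) $ i"
      using lam by (simp add: lap_comp h_def bar_comp \<sigma>_def)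
  qed
  show ?thesis using adm phi c1 c2 by blast
qed

theorem main:
  shows "delta E m0 d \<ge> 1 - (Dsq E d / total_mass m0) / sigma E m0 d \<and>
         (delta E m0 d = 1 - (Dsq E d / total_mass m0) / sigma E m0 d \<longleftrightarrow>
         (\<exists>m1 \<phi>. admissible_weight E d m1 \<and> admissible_map E m0 d \<phi> \<and>
            (\<forall>u v. {u, v} \<in> E \<longrightarrow>
                m1 {u, v} * ((d {u, v})\<^sup>2 - (norm (\<phi> u - \<phi> v))\<^sup>2) = 0) \<and>
            (\<forall>u. laplacian E m0 m1 \<phi> u = lambda1 E m0 m1 *\<^sub>R (\<phi> u - bar m0 \<phi>))))"
  using delta_ge nec suff unfolding M_def by blast
end

theorem corollary1p6:
  fixes E :: "'v::finite set set"
    and m0 :: "'v \<Rightarrow> real"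
    and d :: "'v set \<Rightarrow> real"
  assumes "simple_graph E"
    and "graph_connected E"
    and "\<forall>u. m0 u > 0"
    and "\<forall>e\<in>E. d e > 0"
  shows "delta E m0 d \<ge> 1 - (Dsq E d / total_mass m0) / sigma E m0 d \<and>
         (delta E m0 d = 1 - (Dsq E d / total_mass m0) / sigma E m0 d \<longleftrightarrow>
         (\<exists>m1 \<phi>. admissible_weight E d m1 \<and> admissible_map E m0 d \<phi> \<and>
            (\<forall>u v. {u, v} \<in> E \<longrightarrow>
                m1 {u, v} * ((d {u, v})\<^sup>2 - (norm (\<phi> u - \<phi> v))\<^sup>2) = 0) \<and>
            (\<forall>u. laplacian E m0 m1 \<phi> u = lambda1 E m0 m1 *\<^sub>R (\<phi> u - bar m0 \<phi>))))"
proof (cases "\<exists>a b::'v. a \<noteq> b")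
  case True
  then obtain a b :: 'v where ab: "a \<noteq> b" by blast
  interpret gs2 E m0 d a b using assms ab by unfold_locales auto
  show ?thesis by (rule main)
next
  case False
  then have single: "\<And>x y::'v. x = y" by blast
  fix x :: 'v
  have UNIVx: "UNIV = {x}" using single by auto
  have E0: "E = {}"
  proof -
    { fix e assume "e \<in> E"
      then have "card e = 2" using assms(1) by (simp add: simple_graph_def)
      then obtain p q where "e = {p,q}" "p \<noteq> q" by (auto simp: card_2_iff)
      then have False using single by blast }
    then show ?thesis by blast
  qed
  have D0: "Dsq E d = 0" by (simp add: Dsq_def E0)
  have mx: "m0 x > 0" using assms(3) by simp
  have Mx: "total_mass m0 = m0 x" by (simp add: total_mass_def UNIVx)
  have bar_eq: "bar m0 \<phi> = \<phi> x" for \<phi> :: "'v \<Rightarrow> real^'v"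
    using mx by (simp add: bar_def UNIVx Mx)
  define phi0 :: "'v \<Rightarrow> real^'v" where "phi0 = (\<lambda>_. axis x 1)"
  have adm0: "admissible_map E m0 d phi0"
    by (simp add: admissible_map_def phi0_def norm_axis_1 E0 Mx UNIVx)
  have Dset: "{(norm (bar m0 \<phi>))\<^sup>2 | \<phi>. admissible_map E m0 d \<phi>} = {1}"
  proof -
    have h1: "(norm (bar m0 \<phi>))\<^sup>2 = 1" if "admissible_map E m0 d \<phi>" for \<phi>
    proof -
      have "m0 x * (norm (\<phi> x))\<^sup>2 = m0 x" using that by (simp add: admissible_map_def UNIVx Mx)
      then show ?thesis using mx by (simp add: bar_eq)
    qed
    have "1 \<in> {(norm (bar m0 \<phi>))\<^sup>2 | \<phi>. admissible_map E m0 d \<phi>}"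
      using adm0 h1[OF adm0] by (metis (mono_tags, lifting) mem_Collect_eq)
    moreover have "{(norm (bar m0 \<phi>))\<^sup>2 | \<phi>. admissible_map E m0 d \<phi>} \<subseteq> {1}"
      using h1 by auto
    ultimately show ?thesis by blast
  qed
  have d1: "delta E m0 d = 1" unfolding delta_def Dset by simp
  have rhs: "1 - (Dsq E d / total_mass m0) / sigma E m0 d = 1" by (simp add: D0)
  define one :: "'v set \<Rightarrow> real" where "one = (\<lambda>_. 1)"
  have admw: "admissible_weight E d one"
  proof -
    have gc: "graph_connected (support_edges E one)" unfolding graph_connected_def
      by (metis single rtrancl.rtrancl_refl)
    show ?thesis unfolding admissible_weight_def using gc by (simp add: E0 Dsq_def)
  qed
  have lap0: "laplacian E m0 one phi0 u = lambda1 E m0 one *\<^sub>R (phi0 u - bar m0 phi0)" for u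
    by (simp add: laplacian_def E0 bar_eq phi0_def)
  have "\<exists>m1 \<phi>. admissible_weight E d m1 \<and> admissible_map E m0 d \<phi> \<and>
            (\<forall>u v. {u, v} \<in> E \<longrightarrow>
                m1 {u, v} * ((d {u, v})\<^sup>2 - (norm (\<phi> u - \<phi> v))\<^sup>2) = 0) \<and>
            (\<forall>u. laplacian E m0 m1 \<phi> u = lambda1 E m0 m1 *\<^sub>R (\<phi> u - bar m0 \<phi>))"
    using admw adm0 lap0 E0 by blast
  then show ?thesis unfolding d1 rhs by simp
qed

end
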